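(* Let $n\in\{3,4\}$, let $S$ be an $n\times n$ magic square, and let $S'$ be any arrangement obtained from $S$ by interchanging the entries of two distinct cells. Then $E_{\mathrm{full}}(S')>E_{\mathrm{full}}(S)=0$, where \[ E_{\mathrm{full}}(T)=\sum_{k=0}^{n-2}\mathrm{Cov}(R_k,Z_T)^2+\sum_{\ell=0}^{n-2}\mathrm{Cov}(C_\ell,Z_T)^2+\mathrm{Cov}(D_{\mathrm{main}},Z_T)^2+\mathrm{Cov}(D_{\mathrm{anti}},Z_T)^2 \] for an arrangement $T=(t_{ij})$ with $Z_T(i,j)=t_{ij}-\frac{n^2+1}{2}$.
   Context: An arrangement is a bijection $(i,j)\mapsto t_{ij}$ from $\{0,\dots,n-1\}^2$ to $\{1,\dots,n^2\}$; it is a magic square if all rows, columns and both main diagonals sum to $n(n^2+1)/2$. $R_k(i,j)=1$ if $i=k$ else $0$; $C_\ell(i,j)=1$ if $j=\ell$ else $0$; $D_{\mathrm{main}}(i,j)=1$ if $i=j$ else $0$; $D_{\mathrm{anti}}(i,j)=1$ if $i+j=n-1$ else $0$. Functions on the grid are random variables under the uniform distribution on cells, with $\mathrm{Cov}(F,G)=\frac1{n^2}\sum_{i,j}(F(i,j)-\bar F)(G(i,j)-\bar G)$. *)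

theory Defs
  imports Complex_Main
begin

definition grid :: "nat \<Rightarrow> (nat \<times> nat) set" where
  "grid n = {0..<n} \<times> {0..<n}"

definition arrangement :: "nat \<Rightarrow> (nat \<times> nat \<Rightarrow> nat) \<Rightarrow> bool" where
  "arrangement n t \<longleftrightarrow> bij_betw t (grid n) {1..n^2}"

definition magic_square :: "nat \<Rightarrow> (nat \<times> nat \<Rightarrow> nat) \<Rightarrow> bool" where
  "magic_square n t \<longleftrightarrow> arrangement n t
     \<and> (\<forall>i<n. real (\<Sum>j<n. t (i, j)) = real n * (real n ^ 2 + 1) / 2)
     \<and> (\<forall>j<n. real (\<Sum>i<n. t (i, j)) = real n * (real n ^ 2 + 1) / 2)
     \<and> real (\<Sum>i<n. t (i, i)) = real n * (real n ^ 2 + 1) / 2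
     \<and> real (\<Sum>i<n. t (i, n - 1 - i)) = real n * (real n ^ 2 + 1) / 2"

definition swap_cells :: "(nat \<times> nat \<Rightarrow> nat) \<Rightarrow> nat \<times> nat \<Rightarrow> nat \<times> nat \<Rightarrow> (nat \<times> nat \<Rightarrow> nat)" where
  "swap_cells t a b = (\<lambda>c. if c = a then t b else if c = b then t a else t c)"

definition grid_mean :: "nat \<Rightarrow> (nat \<times> nat \<Rightarrow> real) \<Rightarrow> real" where
  "grid_mean n F = (\<Sum>c\<in>grid n. F c) / (real n ^ 2)"

definition grid_cov :: "nat \<Rightarrow> (nat \<times> nat \<Rightarrow> real) \<Rightarrow> (nat \<times> nat \<Rightarrow> real) \<Rightarrow> real" where
  "grid_cov n F G = (\<Sum>c\<in>grid n. (F c - grid_mean n F) * (G c - grid_mean n G)) / (real n ^ 2)"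

definition R_ind :: "nat \<Rightarrow> nat \<times> nat \<Rightarrow> real" where
  "R_ind k = (\<lambda>(i, j). if i = k then 1 else 0)"

definition C_ind :: "nat \<Rightarrow> nat \<times> nat \<Rightarrow> real" where
  "C_ind l = (\<lambda>(i, j). if j = l then 1 else 0)"

definition D_main :: "nat \<times> nat \<Rightarrow> real" where
  "D_main = (\<lambda>(i, j). if i = j then 1 else 0)"

definition D_anti :: "nat \<Rightarrow> nat \<times> nat \<Rightarrow> real" where
  "D_anti n = (\<lambda>(i, j). if i + j = n - 1 then 1 else 0)"

definition Z_of :: "nat \<Rightarrow> (nat \<times> nat \<Rightarrow> nat) \<Rightarrow> nat \<times> nat \<Rightarrow> real" where
  "Z_of n t = (\<lambda>c. real (t c) - (real n ^ 2 + 1) / 2)"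

definition E_full :: "nat \<Rightarrow> (nat \<times> nat \<Rightarrow> nat) \<Rightarrow> real" where
  "E_full n t =
     (\<Sum>k\<in>{0..n-2}. (grid_cov n (R_ind k) (Z_of n t))^2)
   + (\<Sum>l\<in>{0..n-2}. (grid_cov n (C_ind l) (Z_of n t))^2)
   + (grid_cov n D_main (Z_of n t))^2
   + (grid_cov n (D_anti n) (Z_of n t))^2"

end

theory Submission
  imports Defs
begin

lemma sum_grid: "(\<Sum>c\<in>grid n. g c) = (\<Sum>i<n. \<Sum>j<n. g (i,j))"
  by (simp add: grid_def sum.cartesian_product atLeast0LessThan)

lemma cov_Z:
  assumes "(\<Sum>c\<in>grid n. Z c) = 0"
  shows "grid_cov n F Z = (\<Sum>c\<in>grid n. F c * Z c) / real n^2"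
proof -
  have m: "grid_mean n Z = 0" using assms by (simp add: grid_mean_def)
  have "(\<Sum>c\<in>grid n. (F c - grid_mean n F) * (Z c - grid_mean n Z))
      = (\<Sum>c\<in>grid n. F c * Z c) - grid_mean n F * (\<Sum>c\<in>grid n. Z c)"
    by (simp add: m algebra_simps sum_subtractf sum_distrib_left)
  then show ?thesis using assms by (simp add: grid_cov_def)
qed

lemma row_sum: "k < n \<Longrightarrow> (\<Sum>c\<in>grid n. R_ind k c * Z c) = (\<Sum>j<n. Z (k,j))"
proof -
  assume k: "k < n"
  have "(\<Sum>i<n. \<Sum>j<n. R_ind k (i,j) * Z (i,j)) = (\<Sum>i<n. if i = k then (\<Sum>j<n. Z (i,j)) else 0)"
    by (rule sum.cong) (auto simp: R_ind_def)
  then show ?thesis using k by (simp add: sum_grid)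
qed

lemma col_sum: "l < n \<Longrightarrow> (\<Sum>c\<in>grid n. C_ind l c * Z c) = (\<Sum>i<n. Z (i,l))"
proof -
  assume k: "l < n"
  have "(\<Sum>i<n. \<Sum>j<n. C_ind l (i,j) * Z (i,j)) = (\<Sum>i<n. Z (i,l))"
  proof (rule sum.cong)
    fix i assume "i \<in> {..<n}"
    have "(\<Sum>j<n. C_ind l (i,j) * Z (i,j)) = (\<Sum>j<n. if j = l then Z (i,j) else 0)"
      by (rule sum.cong) (auto simp: C_ind_def)
    then show "(\<Sum>j<n. C_ind l (i,j) * Z (i,j)) = Z (i,l)" using k by simp
  qed simp
  then show ?thesis by (simp add: sum_grid)
qed

lemma dmain_sum: "(\<Sum>c\<in>grid n. D_main c * Z c) = (\<Sum>i<n. Z (i,i))"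
proof -
  have "(\<Sum>i<n. \<Sum>j<n. D_main (i,j) * Z (i,j)) = (\<Sum>i<n. Z (i,i))"
  proof (rule sum.cong)
    fix i assume i: "i \<in> {..<n}"
    have "(\<Sum>j<n. D_main (i,j) * Z (i,j)) = (\<Sum>j<n. if j = i then Z (i,j) else 0)"
      by (rule sum.cong) (auto simp: D_main_def)
    then show "(\<Sum>j<n. D_main (i,j) * Z (i,j)) = Z (i,i)" using i by simp
  qed simp
  then show ?thesis by (simp add: sum_grid)
qed

lemma danti_sum: "(\<Sum>c\<in>grid n. D_anti n c * Z c) = (\<Sum>i<n. Z (i,n-1-i))"
proof -
  have "(\<Sum>i<n. \<Sum>j<n. D_anti n (i,j) * Z (i,j)) = (\<Sum>i<n. Z (i,n-1-i))"
  proof (rule sum.cong)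
    fix i assume i: "i \<in> {..<n}"
    have "(\<Sum>j<n. D_anti n (i,j) * Z (i,j)) = (\<Sum>j<n. if j = n-1-i then Z (i,j) else 0)"
      using i by (intro sum.cong) (auto simp: D_anti_def)
    then show "(\<Sum>j<n. D_anti n (i,j) * Z (i,j)) = Z (i,n-1-i)" using i by simp
  qed simp
  then show ?thesis by (simp add: sum_grid)
qed

lemma gauss_real: "2 * (\<Sum>x\<in>{1..m}. real x) = real m * (real m + 1)"
  by (induction m) (auto simp: algebra_simps)

lemma card_grid: "card (grid n) = n^2"
  by (simp add: grid_def power2_eq_square)

lemma Z_sum0:
  assumes "arrangement n t"
  shows "(\<Sum>c\<in>grid n. Z_of n t c) = 0"
proof -
  have "(\<Sum>c\<in>grid n. real (t c)) = (\<Sum>x\<in>{1..n^2}. real x)"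
    using assms unfolding arrangement_def by (rule sum.reindex_bij_betw)
  moreover have "2 * (\<Sum>x\<in>{1..n^2}. real x) = real n^2 * (real n^2 + 1)"
    using gauss_real[of "n^2"] by simp
  ultimately show ?thesis
    by (simp add: Z_of_def sum_subtractf card_grid)
qed

lemma Z_swap:
  assumes "a \<noteq> b"
  shows "Z_of n (swap_cells t a b) c = Z_of n t c + (if c = a then real (t b) - real (t a) else 0)
           - (if c = b then real (t b) - real (t a) else 0)"
  using assms by (auto simp: swap_cells_def Z_of_def)

lemma delta_row: "c \<in> grid n \<Longrightarrow> (\<Sum>j<n. if (k,j) = c then d else 0) = (if fst c = k then d else (0::real))"
  by (cases c) (auto simp: grid_def)

lemma delta_col: "c \<in> grid n \<Longrightarrow> (\<Sum>i<n. if (i,l) = c then d else 0) = (if snd c = l then d else (0::real))"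
  by (cases c) (auto simp: grid_def)

lemma Zrow: "(\<Sum>j<n. Z_of n t (k,j)) = real (\<Sum>j<n. t (k,j)) - real n * ((real n^2 + 1)/2)"
  by (simp add: Z_of_def sum_subtractf)

lemma Zcol: "(\<Sum>i<n. Z_of n t (i,l)) = real (\<Sum>i<n. t (i,l)) - real n * ((real n^2 + 1)/2)"
  by (simp add: Z_of_def sum_subtractf)

lemma Zdm: "(\<Sum>i<n. Z_of n t (i,i)) = real (\<Sum>i<n. t (i,i)) - real n * ((real n^2 + 1)/2)"
  by (simp add: Z_of_def sum_subtractf)

lemma Zda: "(\<Sum>i<n. Z_of n t (i,n-1-i)) = real (\<Sum>i<n. t (i,n-1-i)) - real n * ((real n^2 + 1)/2)"
  by (simp add: Z_of_def sum_subtractf)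

lemma swap_row:
  assumes "a \<noteq> b" "a \<in> grid n" "b \<in> grid n"
  shows "(\<Sum>j<n. Z_of n (swap_cells t a b) (k,j)) = (\<Sum>j<n. Z_of n t (k,j))
     + (if fst a = k then real (t b) - real (t a) else 0) - (if fst b = k then real (t b) - real (t a) else 0)"
  using assms by (simp add: Z_swap sum.distrib sum_subtractf delta_row)

lemma swap_col:
  assumes "a \<noteq> b" "a \<in> grid n" "b \<in> grid n"
  shows "(\<Sum>i<n. Z_of n (swap_cells t a b) (i,l)) = (\<Sum>i<n. Z_of n t (i,l))
     + (if snd a = l then real (t b) - real (t a) else 0) - (if snd b = l then real (t b) - real (t a) else 0)"
  using assms by (simp add: Z_swap sum.distrib sum_subtractf delta_col)

lemma swap_tot:
  assumes "a \<noteq> b" "a \<in> grid n" "b \<in> grid n"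
  shows "(\<Sum>c\<in>grid n. Z_of n (swap_cells t a b) c) = (\<Sum>c\<in>grid n. Z_of n t c)"
proof -
  have f: "finite (grid n)" by (simp add: grid_def)
  show ?thesis using assms f by (simp add: Z_swap sum.distrib sum_subtractf)
qed

lemma E_ge_R:
  assumes "k \<in> {0..n-2}"
  shows "(grid_cov n (R_ind k) Z)^2 \<le> (\<Sum>k\<in>{0..n-2}. (grid_cov n (R_ind k) Z)^2)"
  using assms by (intro member_le_sum) auto

lemma E_ge_C:
  assumes "k \<in> {0..n-2}"
  shows "(grid_cov n (C_ind k) Z)^2 \<le> (\<Sum>k\<in>{0..n-2}. (grid_cov n (C_ind k) Z)^2)"
  using assms by (intro member_le_sum) auto

theorem mainTheorem9:
  fixes n :: nat and S :: "nat \<times> nat \<Rightarrow> nat" and a b :: "nat \<times> nat"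
  assumes "n \<in> {3, 4}"
    and "magic_square n S"
    and "a \<in> grid n" and "b \<in> grid n" and "a \<noteq> b"
  shows "E_full n (swap_cells S a b) > E_full n S \<and> E_full n S = 0"
proof -
  note ms = assms(2)[unfolded magic_square_def]
  have arr: "arrangement n S" using ms by blast
  have n3: "n \<ge> 3" using assms(1) by auto
  have npos: "real n ^ 2 > 0" using n3 by simp
  let ?Z = "Z_of n S"
  let ?Z' = "Z_of n (swap_cells S a b)"
  let ?d = "real (S b) - real (S a)"
  have tot: "(\<Sum>c\<in>grid n. ?Z c) = 0" using Z_sum0[OF arr] .
  have tot': "(\<Sum>c\<in>grid n. ?Z' c) = 0" using swap_tot[OF assms(5,3,4)] tot by simp
  have rowZ: "(\<Sum>j<n. ?Z (k,j)) = 0" if "k < n" for k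
    using ms that by (simp add: Zrow)
  have colZ: "(\<Sum>i<n. ?Z (i,l)) = 0" if "l < n" for l
    using ms that by (simp add: Zcol)
  have "inj_on S (grid n)" using arr unfolding arrangement_def by (rule bij_betw_imp_inj_on)
  then have "S a \<noteq> S b" using assms(3-5) by (meson inj_on_contraD)
  then have d0: "?d \<noteq> 0" by simp
  have E0: "E_full n S = 0"
  proof -
    have "grid_cov n (R_ind k) ?Z = 0" if "k \<in> {0..n-2}" for k
      using that n3 by (simp add: cov_Z[OF tot] row_sum rowZ)
    moreover have "grid_cov n (C_ind k) ?Z = 0" if "k \<in> {0..n-2}" for k
      using that n3 by (simp add: cov_Z[OF tot] col_sum colZ)
    moreover have "grid_cov n D_main ?Z = 0"
      using ms by (simp add: cov_Z[OF tot] dmain_sum Zdm)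
    moreover have "grid_cov n (D_anti n) ?Z = 0"
    proof -
      have da: "(\<Sum>i<n. ?Z (i,n-1-i)) = 0"
        by (subst Zda) (use ms in simp)
      show ?thesis by (simp only: cov_Z[OF tot] danti_sum da)
    qed
    ultimately show ?thesis unfolding E_full_def by simp
  qed
  have fa: "fst a < n" "snd a < n" "fst b < n" "snd b < n" using assms(3,4) by (auto simp: grid_def)
  have nonneg: "0 \<le> (\<Sum>k\<in>{0..n-2}. (grid_cov n (R_ind k) ?Z')^2)"
      "0 \<le> (\<Sum>k\<in>{0..n-2}. (grid_cov n (C_ind k) ?Z')^2)"
      "0 \<le> (grid_cov n D_main ?Z')^2" "0 \<le> (grid_cov n (D_anti n) ?Z')^2"
    by (auto intro: sum_nonneg)
  have pos: "E_full n (swap_cells S a b) > 0"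
  proof (cases "fst a = fst b")
    case False
    obtain k where k: "k \<in> {0..n-2}" "(fst a = k) \<noteq> (fst b = k)"
    proof (cases "fst a \<le> n - 2")
      case True then show ?thesis using that[of "fst a"] False by auto
    next
      case F2: False
      then have "fst b \<le> n - 2" using False fa by linarith
      then show ?thesis using that[of "fst b"] False by auto
    qed
    have "grid_cov n (R_ind k) ?Z' = (if fst a = k then ?d else - ?d) / real n ^ 2"
      using k n3 fa by (simp add: cov_Z[OF tot'] row_sum swap_row[OF assms(5,3,4)] rowZ)
    then have "(grid_cov n (R_ind k) ?Z')^2 > 0" using d0 npos by simp
    then show ?thesis using E_ge_R[OF k(1), of ?Z'] nonneg unfolding E_full_def by linarith
  next
    case True
    then have ne: "snd a \<noteq> snd b" using assms(5) by (simp add: prod_eq_iff)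
    obtain k where k: "k \<in> {0..n-2}" "(snd a = k) \<noteq> (snd b = k)"
    proof (cases "snd a \<le> n - 2")
      case True then show ?thesis using that[of "snd a"] ne by auto
    next
      case F2: False
      then have "snd b \<le> n - 2" using ne fa by linarith
      then show ?thesis using that[of "snd b"] ne by auto
    qed
    have "grid_cov n (C_ind k) ?Z' = (if snd a = k then ?d else - ?d) / real n ^ 2"
      using k n3 fa by (simp add: cov_Z[OF tot'] col_sum swap_col[OF assms(5,3,4)] colZ)
    then have "(grid_cov n (C_ind k) ?Z')^2 > 0" using d0 npos by simp
    then show ?thesis using E_ge_C[OF k(1), of ?Z'] nonneg unfolding E_full_def by linarith
  qed
  show ?thesis using E0 pos by simp
qed

end
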